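(* For a connected undirected unweighted graph $G=(V,E)$ with $N$ vertices, any $S_0\subseteq V$ and any $r>1$, we have $\mathsf{fp}_{r}^{\delta=1/2}(G,S_0)\ge|S_0|/N$.
   Context: Mixed $\delta$-updating on $G$: each vertex holds a mutant (fitness $r$) or wild-type (fitness $1$); $f_S(x)$ is the fitness at $x$ when $S$ is the mutant set. At each step, with probability $\delta$ a death-Birth step: choose $v$ uniformly to die, choose a neighbor $u$ of $v$ with probability proportional to $f_S(u)$, $u$ copies its type onto $v$; with probability $1-\delta$ a Birth-death step: choose $u$ with probability proportional to $f_S(u)$ among all vertices, choose a uniformly random neighbor $v$ of $u$, $u$ copies its type onto $v$. $\mathsf{fp}_r^\delta(G,S_0)$ is the probability all vertices eventually become mutant from initial mutant set $S_0$. *)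

theory Defs
  imports Complex_Main
begin

definition fit :: "real \<Rightarrow> 'a set \<Rightarrow> 'a \<Rightarrow> real" where
  "fit r S x = (if x \<in> S then r else 1)"

definition nbrs :: "'a set \<Rightarrow> ('a \<Rightarrow> 'a \<Rightarrow> bool) \<Rightarrow> 'a \<Rightarrow> 'a set" where
  "nbrs V E v = {u \<in> V. E v u}"

text \<open>u copies its type onto v.\<close>
definition upd :: "'a set \<Rightarrow> 'a \<Rightarrow> 'a \<Rightarrow> 'a set" where
  "upd S u v = (if u \<in> S then insert v S else S - {v})"

text \<open>Probability that the mixed delta-updating process started from mutant set S
  has reached fixation (all vertices mutant, an absorbing state) within n steps.\<close>
fun fix_within :: "'a set \<Rightarrow> ('a \<Rightarrow> 'a \<Rightarrow> bool) \<Rightarrow> real \<Rightarrow> real \<Rightarrow> nat \<Rightarrow> 'a set \<Rightarrow> real" where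
  "fix_within V E r \<delta> 0 S = (if S = V then 1 else 0)"
| "fix_within V E r \<delta> (Suc n) S = (if S = V then 1 else
     \<delta> * (\<Sum>v\<in>V. (1 / real (card V)) *
            (\<Sum>u\<in>nbrs V E v. fit r S u / (\<Sum>w\<in>nbrs V E v. fit r S w)
                              * fix_within V E r \<delta> n (upd S u v)))
   + (1 - \<delta>) * (\<Sum>u\<in>V. fit r S u / (\<Sum>w\<in>V. fit r S w) *
            (\<Sum>v\<in>nbrs V E u. (1 / real (card (nbrs V E u)))
                              * fix_within V E r \<delta> n (upd S u v))))"

text \<open>Fixation probability = probability of eventually reaching the all-mutant state
  = limit (supremum) of the monotone sequence of n-step fixation probabilities.\<close>
definition fp :: "'a set \<Rightarrow> ('a \<Rightarrow> 'a \<Rightarrow> bool) \<Rightarrow> real \<Rightarrow> real \<Rightarrow> 'a set \<Rightarrow> real" where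
  "fp V E r \<delta> S0 = (SUP n. fix_within V E r \<delta> n S0)"

definition connected_graph :: "'a set \<Rightarrow> ('a \<Rightarrow> 'a \<Rightarrow> bool) \<Rightarrow> bool" where
  "connected_graph V E \<longleftrightarrow> (\<forall>x\<in>V. \<forall>y\<in>V. (\<lambda>a b. a \<in> V \<and> b \<in> V \<and> E a b)\<^sup>*\<^sup>* x y)"

end

theory Submission
  imports Defs
begin

definition stp :: "'a set \<Rightarrow> ('a \<Rightarrow> 'a \<Rightarrow> bool) \<Rightarrow> real \<Rightarrow> real \<Rightarrow> ('a set \<Rightarrow> real) \<Rightarrow> 'a set \<Rightarrow> real" where
  "stp V E r \<delta> f S = \<delta> * (\<Sum>v\<in>V. (1 / real (card V)) *
            (\<Sum>u\<in>nbrs V E v. fit r S u / (\<Sum>w\<in>nbrs V E v. fit r S w)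
                              * f (upd S u v)))
   + (1 - \<delta>) * (\<Sum>u\<in>V. fit r S u / (\<Sum>w\<in>V. fit r S w) *
            (\<Sum>v\<in>nbrs V E u. (1 / real (card (nbrs V E u)))
                              * f (upd S u v)))"

lemma fw_Suc: "fix_within V E r \<delta> (Suc n) S = (if S = V then 1 else stp V E r \<delta> (fix_within V E r \<delta> n) S)"
  by (simp add: stp_def)

lemma fw_0: "fix_within V E r \<delta> 0 S = (if S = V then 1 else 0)" by simp

declare fix_within.simps[simp del]

lemma zi: fixes Wv Wu du dv N F r :: real
  assumes "0<Wv" "Wv \<le> r*dv" "du \<le> Wu" "1 \<le> du" "1 \<le> dv" "N \<le> F" "F \<le> r*N" "1 \<le> N" "1<r"
  shows "1/Wu/(N*N) + 1/F/dv/N \<le> r/Wv/(N*N) + r/F/du/N"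
proof -
  have a: "1/dv \<le> r/Wv" using assms by (simp add: field_simps)
  have b: "1/Wu \<le> 1/du" using assms by (simp add: field_simps)
  have c: "1/N \<le> r/F" using assms by (simp add: field_simps)
  have d: "1/F \<le> 1/N" using assms by (simp add: field_simps)
  have "1/Wu/(N*N) + 1/F/dv/N \<le> (1/du)*(1/N)*(1/N) + (1/dv)*(1/F)*(1/N)"
  proof -
    have "1/Wu/(N*N) \<le> (1/du)/(N*N)" using b assms by (intro divide_right_mono) auto
    then show ?thesis by (simp add: algebra_simps)
  qed
  also have "\<dots> \<le> (1/dv)*(1/N)*(1/N) + (1/du)*(r/F)*(1/N)"
  proof -
    have "(1/du)*(1/N) \<le> (1/du)*(r/F)" using c assms by (intro mult_left_mono) auto
    moreover have "(1/dv)*(1/F) \<le> (1/dv)*(1/N)" using d assms by (intro mult_left_mono) auto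
    ultimately have "(1/du)*(1/N) + (1/dv)*(1/F) \<le> (1/dv)*(1/N) + (1/du)*(r/F)" by linarith
    then have "((1/du)*(1/N) + (1/dv)*(1/F))*(1/N) \<le> ((1/dv)*(1/N) + (1/du)*(r/F))*(1/N)"
      using assms by (intro mult_right_mono) auto
    then show ?thesis by (simp add: algebra_simps)
  qed
  also have "\<dots> \<le> r/Wv/(N*N) + r/F/du/N"
  proof -
    have "(1/dv)*(1/N)*(1/N) \<le> (r/Wv)*(1/N)*(1/N)" using a assms by (intro mult_right_mono) auto
    then show ?thesis by (simp add: algebra_simps)
  qed
  finally show ?thesis .
qed

lemma fw_empty: "V \<noteq> {} \<Longrightarrow> fix_within V E r \<delta> n {} = 0"
proof (induction n)
  case 0 then show ?case by (simp add: fw_0)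
next
  case (Suc n)
  then show ?case by (simp add: fw_Suc stp_def upd_def)
qed

lemma fw_V: "fix_within V E r \<delta> n V = 1"
  by (cases n) (simp_all add: fw_Suc fw_0)

locale mg =
  fixes V :: "'a set" and E :: "'a \<Rightarrow> 'a \<Rightarrow> bool" and r :: real
  assumes finV: "finite V" and ne: "V \<noteq> {}"
    and Ein: "\<And>x y. E x y \<Longrightarrow> x \<in> V \<and> y \<in> V"
    and sym: "\<And>x y. E x y \<Longrightarrow> E y x"
    and irr: "\<And>x. \<not> E x x"
    and r1: "r > 1"
    and nbne: "\<And>x. x \<in> V \<Longrightarrow> nbrs V E x \<noteq> {}"
    and conn: "connected_graph V E"
begin

lemma fit_pos: "fit r S x > 0" using r1 by (simp add: fit_def)
lemma fit_nn: "fit r S x \<ge> 0" using r1 by (simp add: fit_def)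
lemma fit_ge1: "fit r S x \<ge> 1" using r1 by (simp add: fit_def)
lemma fit_le: "fit r S x \<le> r" using r1 by (simp add: fit_def)
lemma nb_sub: "nbrs V E x \<subseteq> V" by (auto simp: nbrs_def)
lemma fin_nb: "finite (nbrs V E x)" using nb_sub finV finite_subset by blast
lemma nb_mem: "u \<in> nbrs V E v \<longleftrightarrow> u \<in> V \<and> E v u" by (simp add: nbrs_def)
lemma W_pos: "x \<in> V \<Longrightarrow> (\<Sum>w\<in>nbrs V E x. fit r S w) > 0"
  using nbne fin_nb fit_pos by (meson sum_pos)
lemma F_pos: "(\<Sum>w\<in>V. fit r S w) > 0"
  using ne finV fit_pos by (meson sum_pos)
lemma d_pos: "x \<in> V \<Longrightarrow> card (nbrs V E x) > 0"
  using nbne fin_nb by (simp add: card_gt_0_iff)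
lemma N_pos: "card V > 0" using finV ne by (simp add: card_gt_0_iff)
lemma upd_sub: "S \<subseteq> V \<Longrightarrow> u \<in> V \<Longrightarrow> v \<in> V \<Longrightarrow> upd S u v \<subseteq> V"
  by (auto simp: upd_def)

lemma stp_const: "stp V E r d (\<lambda>T. c) S = c"
proof -
  have 1: "(\<Sum>u\<in>nbrs V E v. fit r S u / (\<Sum>w\<in>nbrs V E v. fit r S w) * c) = c" if "v \<in> V" for v
  proof -
    have eq: "\<And>u. fit r S u / (\<Sum>w\<in>nbrs V E v. fit r S w) * c = fit r S u * (c / (\<Sum>w\<in>nbrs V E v. fit r S w))" by simp
    have "(\<Sum>u\<in>nbrs V E v. fit r S u / (\<Sum>w\<in>nbrs V E v. fit r S w) * c)
       = (\<Sum>u\<in>nbrs V E v. fit r S u) * (c / (\<Sum>w\<in>nbrs V E v. fit r S w))"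
      by (simp only: eq sum_distrib_right)
    then show ?thesis using W_pos[OF that, of S] by simp
  qed
  have 2: "(\<Sum>v\<in>nbrs V E u. 1 / real (card (nbrs V E u)) * c) = c" if "u \<in> V" for u
    using d_pos[OF that] by simp
  have 3: "(\<Sum>u\<in>V. fit r S u / (\<Sum>w\<in>V. fit r S w) * c) = c"
  proof -
    have eq: "\<And>u. fit r S u / (\<Sum>w\<in>V. fit r S w) * c = fit r S u * (c / (\<Sum>w\<in>V. fit r S w))" by simp
    have "(\<Sum>u\<in>V. fit r S u / (\<Sum>w\<in>V. fit r S w) * c) = (\<Sum>u\<in>V. fit r S u) * (c / (\<Sum>w\<in>V. fit r S w))"
      by (simp only: eq sum_distrib_right)
    then show ?thesis using F_pos[of S] by simp
  qed
  have 4: "(\<Sum>v\<in>V. 1 / real (card V) * c) = c" using N_pos by simp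
  show ?thesis unfolding stp_def using 1 2 3 4 by (simp add: algebra_simps)
qed

lemma stp_diff: "stp V E r d f S - stp V E r d g S = stp V E r d (\<lambda>T. f T - g T) S"
  unfolding stp_def by (simp only: right_diff_distrib sum_subtractf)

lemma stp_nonneg: assumes "0 \<le> d" "d \<le> 1" "S \<subseteq> V" "\<And>T. T \<subseteq> V \<Longrightarrow> 0 \<le> g T"
  shows "0 \<le> stp V E r d g S"
  unfolding stp_def using assms fit_nn upd_sub nb_sub
  by (intro add_nonneg_nonneg mult_nonneg_nonneg sum_nonneg divide_nonneg_nonneg)
     (auto simp: less_imp_le nb_mem intro!: sum_nonneg)

lemma stp_mono: assumes "0 \<le> d" "d \<le> 1" "S \<subseteq> V" "\<And>T. T \<subseteq> V \<Longrightarrow> f T \<le> g T"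
  shows "stp V E r d f S \<le> stp V E r d g S"
proof -
  have "0 \<le> stp V E r d (\<lambda>T. g T - f T) S" using assms by (intro stp_nonneg) auto
  then show ?thesis using stp_diff[of d g S f] by simp
qed

lemma stp_single: assumes "0 \<le> d" "d \<le> 1" "S \<subseteq> V" "\<And>T. T \<subseteq> V \<Longrightarrow> 0 \<le> g T"
   and u: "u \<in> V" and v: "v \<in> nbrs V E u"
  shows "(1 - d) * (fit r S u / (\<Sum>w\<in>V. fit r S w) * (1 / real (card (nbrs V E u)) * g (upd S u v)))
     \<le> stp V E r d g S"
proof -
  have gn: "0 \<le> g (upd S x y)" if "x \<in> V" "y \<in> V" for x y using assms upd_sub that by auto
  have A: "0 \<le> (\<Sum>v\<in>V. (1 / real (card V)) *
            (\<Sum>u\<in>nbrs V E v. fit r S u / (\<Sum>w\<in>nbrs V E v. fit r S w) * g (upd S u v)))"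
    using gn fit_nn nb_sub
    by (intro sum_nonneg mult_nonneg_nonneg divide_nonneg_nonneg) (auto simp: nb_mem intro!: sum_nonneg)
  have inn: "0 \<le> (\<Sum>v\<in>nbrs V E x. (1 / real (card (nbrs V E x))) * g (upd S x v))" if "x \<in> V" for x
    using gn that by (intro sum_nonneg) (auto simp: nb_mem)
  have i1: "1 / real (card (nbrs V E u)) * g (upd S u v) \<le> (\<Sum>v\<in>nbrs V E u. (1 / real (card (nbrs V E u))) * g (upd S u v))"
    using gn u v fin_nb by (intro member_le_sum) (auto simp: nb_mem)
  have i2: "fit r S u / (\<Sum>w\<in>V. fit r S w) * (\<Sum>v\<in>nbrs V E u. (1 / real (card (nbrs V E u))) * g (upd S u v))
     \<le> (\<Sum>u\<in>V. fit r S u / (\<Sum>w\<in>V. fit r S w) * (\<Sum>v\<in>nbrs V E u. (1 / real (card (nbrs V E u))) * g (upd S u v)))"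
    by (rule member_le_sum[OF u _ finV]) (use inn fit_nn F_pos in \<open>fastforce intro!: mult_nonneg_nonneg divide_nonneg_nonneg simp: less_imp_le\<close>)
  have c: "0 \<le> fit r S u / (\<Sum>w\<in>V. fit r S w)" using fit_nn[of S u] F_pos[of S] by simp
  have "fit r S u / (\<Sum>w\<in>V. fit r S w) * (1 / real (card (nbrs V E u)) * g (upd S u v))
     \<le> (\<Sum>u\<in>V. fit r S u / (\<Sum>w\<in>V. fit r S w) * (\<Sum>v\<in>nbrs V E u. (1 / real (card (nbrs V E u))) * g (upd S u v)))"
    using mult_left_mono[OF i1 c] i2 by linarith
  then have "(1 - d) * (fit r S u / (\<Sum>w\<in>V. fit r S w) * (1 / real (card (nbrs V E u)) * g (upd S u v)))
     \<le> (1 - d) * (\<Sum>u\<in>V. fit r S u / (\<Sum>w\<in>V. fit r S w) * (\<Sum>v\<in>nbrs V E u. (1 / real (card (nbrs V E u))) * g (upd S u v)))"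
    using assms by (intro mult_left_mono) auto
  moreover have "0 \<le> d * (\<Sum>v\<in>V. (1 / real (card V)) *
            (\<Sum>u\<in>nbrs V E v. fit r S u / (\<Sum>w\<in>nbrs V E v. fit r S w) * g (upd S u v)))"
    using A assms by simp
  ultimately show ?thesis unfolding stp_def by linarith
qed

lemma swap_nb: "(\<Sum>v\<in>V. \<Sum>u\<in>nbrs V E v. H u v) = (\<Sum>u\<in>V. \<Sum>v\<in>nbrs V E u. H u v)"
proof -
  have "(\<Sum>v\<in>V. \<Sum>u\<in>nbrs V E v. H u v) = (\<Sum>v\<in>V. \<Sum>u\<in>V. if E v u then H u v else 0)"
    unfolding nbrs_def using finV by (simp add: sum.inter_filter)
  also have "\<dots> = (\<Sum>u\<in>V. \<Sum>v\<in>V. if E v u then H u v else 0)" by (rule sum.swap)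
  also have "\<dots> = (\<Sum>u\<in>V. \<Sum>v\<in>V. if E u v then H u v else 0)"
    using sym by (intro sum.cong refl) (metis)
  also have "\<dots> = (\<Sum>u\<in>V. \<Sum>v\<in>nbrs V E u. H u v)"
    unfolding nbrs_def using finV by (simp add: sum.inter_filter)
  finally show ?thesis .
qed

definition cc :: "'a set \<Rightarrow> 'a \<Rightarrow> 'a \<Rightarrow> real" where
  "cc S u v = (if u \<in> S \<and> v \<notin> S then 1 else 0) - (if v \<in> S \<and> u \<notin> S then 1 else 0)"

lemma card_upd: assumes "finite S" "u \<noteq> v"
  shows "real (card (upd S u v)) = real (card S) + cc S u v"
proof (cases "v \<in> S")
  case True
  then have "card S \<ge> 1" using assms(1) by (metis One_nat_def Suc_leI card_gt_0_iff empty_iff)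
  then show ?thesis using assms True by (auto simp: upd_def cc_def card_insert_if card_Diff_singleton_if of_nat_diff)
next
  case False
  then show ?thesis using assms by (auto simp: upd_def cc_def card_insert_if card_Diff_singleton_if)
qed

lemma antisym_sum: "(\<Sum>u\<in>V. \<Sum>v\<in>nbrs V E u. Z u v * cc S u v)
   = (\<Sum>u\<in>V. \<Sum>v\<in>nbrs V E u. (if u \<in> S \<and> v \<notin> S then Z u v - Z v u else 0))"
proof -
  have pt: "Z u v * cc S u v = (if u \<in> S \<and> v \<notin> S then Z u v else 0) - (if v \<in> S \<and> u \<notin> S then Z u v else 0)" for u v
    by (simp add: cc_def)
  have "(\<Sum>u\<in>V. \<Sum>v\<in>nbrs V E u. Z u v * cc S u v)
     = (\<Sum>u\<in>V. \<Sum>v\<in>nbrs V E u. (if u \<in> S \<and> v \<notin> S then Z u v else 0))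
     - (\<Sum>u\<in>V. \<Sum>v\<in>nbrs V E u. (if v \<in> S \<and> u \<notin> S then Z u v else 0))"
    by (simp only: pt sum_subtractf)
  also have "(\<Sum>u\<in>V. \<Sum>v\<in>nbrs V E u. (if v \<in> S \<and> u \<notin> S then Z u v else 0))
    = (\<Sum>u\<in>V. \<Sum>v\<in>nbrs V E u. (if u \<in> S \<and> v \<notin> S then Z v u else 0))"
    by (rule swap_nb[symmetric])
  also have "(\<Sum>u\<in>V. \<Sum>v\<in>nbrs V E u. (if u \<in> S \<and> v \<notin> S then Z u v else 0)) -
    (\<Sum>u\<in>V. \<Sum>v\<in>nbrs V E u. (if u \<in> S \<and> v \<notin> S then Z v u else 0))
    = (\<Sum>u\<in>V. \<Sum>v\<in>nbrs V E u. (if u \<in> S \<and> v \<notin> S then Z u v else 0) - (if u \<in> S \<and> v \<notin> S then Z v u else 0))"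
    by (simp only: sum_subtractf)
  also have "\<dots> = (\<Sum>u\<in>V. \<Sum>v\<in>nbrs V E u. (if u \<in> S \<and> v \<notin> S then Z u v - Z v u else 0))"
    by (intro sum.cong refl) auto
  finally show ?thesis .
qed

lemma W_le: "x \<in> V \<Longrightarrow> (\<Sum>w\<in>nbrs V E x. fit r S w) \<le> r * real (card (nbrs V E x))"
proof -
  have "(\<Sum>w\<in>nbrs V E x. fit r S w) \<le> (\<Sum>w\<in>nbrs V E x. r)" by (intro sum_mono fit_le)
  then show ?thesis by (simp add: mult.commute)
qed
lemma W_ge: "x \<in> V \<Longrightarrow> real (card (nbrs V E x)) \<le> (\<Sum>w\<in>nbrs V E x. fit r S w)"
proof -
  have "(\<Sum>w\<in>nbrs V E x. 1) \<le> (\<Sum>w\<in>nbrs V E x. fit r S w)" by (intro sum_mono fit_ge1)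
  then show ?thesis by simp
qed
lemma F_le: "(\<Sum>w\<in>V. fit r S w) \<le> r * real (card V)"
proof -
  have "(\<Sum>w\<in>V. fit r S w) \<le> (\<Sum>w\<in>V. r)" by (intro sum_mono fit_le)
  then show ?thesis by (simp add: mult.commute)
qed
lemma F_ge: "real (card V) \<le> (\<Sum>w\<in>V. fit r S w)"
proof -
  have "(\<Sum>w\<in>V. 1) \<le> (\<Sum>w\<in>V. fit r S w)" by (intro sum_mono fit_ge1)
  then show ?thesis by simp
qed

lemma submart: assumes SV: "S \<subseteq> V"
  shows "real (card S) / real (card V) \<le> stp V E r (1/2) (\<lambda>T. real (card T) / real (card V)) S"
proof -
  define N where "N = real (card V)"
  define \<psi> :: "'a set \<Rightarrow> real" where "\<psi> = (\<lambda>T. real (card T) / N)"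
  define F where "F = (\<Sum>w\<in>V. fit r S w)"
  define W where "W = (\<lambda>v. (\<Sum>w\<in>nbrs V E v. fit r S w))"
  define dg where "dg = (\<lambda>u. real (card (nbrs V E u)))"
  define X :: "'a \<Rightarrow> 'a \<Rightarrow> real" where "X = (\<lambda>u v. fit r S u / W v / (N*N))"
  define Y :: "'a \<Rightarrow> 'a \<Rightarrow> real" where "Y = (\<lambda>u v. fit r S u / F / dg u / N)"
  have finS: "finite S" using SV finV finite_subset by blast
  have Npos: "N \<ge> 1" using N_pos unfolding N_def by simp
  have key: "\<psi> (upd S u v) - \<psi> S = cc S u v / N" if "u \<in> nbrs V E v" for u v
  proof -
    have "u \<noteq> v" using that irr by (auto simp: nb_mem)
    then show ?thesis using card_upd[OF finS] unfolding \<psi>_def by (metis add_diff_cancel_left' diff_divide_distrib)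
  qed
  have key2: "\<psi> (upd S u v) - \<psi> S = cc S u v / N" if "v \<in> nbrs V E u" for u v
  proof -
    have "u \<noteq> v" using that irr by (auto simp: nb_mem)
    then show ?thesis using card_upd[OF finS] unfolding \<psi>_def by (metis add_diff_cancel_left' diff_divide_distrib)
  qed
  have dB: "(\<Sum>v\<in>V. (1 / N) * (\<Sum>u\<in>nbrs V E v. fit r S u / W v * (\<psi> (upd S u v) - \<psi> S)))
      = (\<Sum>u\<in>V. \<Sum>v\<in>nbrs V E u. X u v * cc S u v)"
  proof -
    have "(\<Sum>v\<in>V. (1 / N) * (\<Sum>u\<in>nbrs V E v. fit r S u / W v * (\<psi> (upd S u v) - \<psi> S)))
       = (\<Sum>v\<in>V. \<Sum>u\<in>nbrs V E v. X u v * cc S u v)"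
      by (intro sum.cong refl) (simp add: sum_distrib_left key X_def mult_ac)
    also have "\<dots> = (\<Sum>u\<in>V. \<Sum>v\<in>nbrs V E u. X u v * cc S u v)" by (rule swap_nb)
    finally show ?thesis .
  qed
  have Bd: "(\<Sum>u\<in>V. fit r S u / F * (\<Sum>v\<in>nbrs V E u. (1 / dg u) * (\<psi> (upd S u v) - \<psi> S)))
      = (\<Sum>u\<in>V. \<Sum>v\<in>nbrs V E u. Y u v * cc S u v)"
    by (intro sum.cong refl) (simp add: sum_distrib_left key2 Y_def mult_ac)
  have tot: "(\<Sum>u\<in>V. \<Sum>v\<in>nbrs V E u. X u v * cc S u v) + (\<Sum>u\<in>V. \<Sum>v\<in>nbrs V E u. Y u v * cc S u v)
     = (\<Sum>u\<in>V. \<Sum>v\<in>nbrs V E u. (\<lambda>a b. X a b + Y a b) u v * cc S u v)"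
    by (simp add: sum.distrib[symmetric] distrib_right)
  have nn: "0 \<le> (\<Sum>u\<in>V. \<Sum>v\<in>nbrs V E u. (\<lambda>a b. X a b + Y a b) u v * cc S u v)"
    unfolding antisym_sum
  proof (intro sum_nonneg)
    fix u v assume u: "u \<in> V" and v: "v \<in> nbrs V E u"
    have vV: "v \<in> V" using v by (simp add: nb_mem)
    show "0 \<le> (if u \<in> S \<and> v \<notin> S then X u v + Y u v - (X v u + Y v u) else 0)"
    proof (cases "u \<in> S \<and> v \<notin> S")
      case True
      have "1/W u/(N*N) + 1/F/dg v/N \<le> r/W v/(N*N) + r/F/dg u/N"
        apply (rule zi)
        using W_pos[OF vV, of S] W_le[OF vV, of S] W_ge[OF u, of S] d_pos[OF u] d_pos[OF vV]
          F_le[of S] F_ge[of S] Npos r1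
        by (auto simp: W_def dg_def N_def F_def)
      then show ?thesis using True by (simp add: X_def Y_def fit_def)
    qed auto
  qed
  have "stp V E r (1/2) \<psi> S - \<psi> S = stp V E r (1/2) (\<lambda>T. \<psi> T - \<psi> S) S"
    using stp_diff[of "1/2" \<psi> S "\<lambda>T. \<psi> S"] stp_const[of "1/2" "\<psi> S" S] by simp
  also have "\<dots> = (1/2) * ((\<Sum>u\<in>V. \<Sum>v\<in>nbrs V E u. X u v * cc S u v) + (\<Sum>u\<in>V. \<Sum>v\<in>nbrs V E u. Y u v * cc S u v))"
    unfolding stp_def dB[unfolded W_def N_def, symmetric] Bd[unfolded F_def dg_def, symmetric] N_def
    by (simp add: algebra_simps)
  finally have "0 \<le> stp V E r (1/2) \<psi> S - \<psi> S" using nn tot by simp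
  then show ?thesis unfolding \<psi>_def N_def by simp
qed

lemma h_bounds: "S \<subseteq> V \<Longrightarrow> 0 \<le> fix_within V E r (1/2) n S \<and> fix_within V E r (1/2) n S \<le> 1"
proof (induction n arbitrary: S)
  case 0
  then show ?case by (simp add: fw_0)
next
  case (Suc n)
  show ?case
  proof (cases "S = V")
    case True then show ?thesis by (simp add: fw_Suc)
  next
    case False
    have "0 \<le> stp V E r (1/2) (fix_within V E r (1/2) n) S"
      using Suc by (intro stp_nonneg) auto
    moreover have "stp V E r (1/2) (fix_within V E r (1/2) n) S \<le> stp V E r (1/2) (\<lambda>T. 1) S"
      using Suc by (intro stp_mono) auto
    ultimately show ?thesis using False stp_const[of "1/2" 1 S] by (simp add: fw_Suc)
  qed
qed

lemma h_mono: "S \<subseteq> V \<Longrightarrow> fix_within V E r (1/2) n S \<le> fix_within V E r (1/2) (Suc n) S"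
proof (induction n arbitrary: S)
  case 0
  have "0 \<le> stp V E r (1/2) (fix_within V E r (1/2) 0) S"
    using h_bounds 0 by (intro stp_nonneg) auto
  then show ?case by (simp add: fw_Suc fw_0)
next
  case (Suc n)
  have "stp V E r (1/2) (fix_within V E r (1/2) n) S \<le> stp V E r (1/2) (fix_within V E r (1/2) (Suc n)) S"
    using Suc by (intro stp_mono) auto
  then show ?case by (simp add: fw_Suc)
qed

lemma h_empty: "fix_within V E r (1/2) n {} = 0"
proof (induction n)
  case 0 then show ?case using ne by (simp add: fw_0)
next
  case (Suc n)
  have "upd {} u v = {}" for u v by (simp add: upd_def)
  then show ?case using ne Suc by (simp add: fw_Suc stp_def upd_def)
qed

lemma h_V: "fix_within V E r (1/2) n V = 1"
  by (cases n) (simp_all add: fw_Suc fw_0)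

lemma h_lim: "S \<subseteq> V \<Longrightarrow> (\<lambda>n. fix_within V E r (1/2) n S) \<longlonglongrightarrow> fp V E r (1/2) S"
  unfolding fp_def
  by (rule LIMSEQ_incseq_SUP) (use h_bounds h_mono in \<open>auto intro!: incseq_SucI bdd_aboveI\<close>)

lemma stp_tendsto: assumes "\<And>T. T \<subseteq> V \<Longrightarrow> (\<lambda>n. f n T) \<longlonglongrightarrow> g T" "S \<subseteq> V"
  shows "(\<lambda>n. stp V E r d (f n) S) \<longlonglongrightarrow> stp V E r d g S"
  unfolding stp_def
  by (intro tendsto_intros assms(1) upd_sub[OF assms(2)]) (auto simp: nb_mem)

lemma L_fix: assumes "S \<subseteq> V" "S \<noteq> V"
  shows "fp V E r (1/2) S = stp V E r (1/2) (fp V E r (1/2)) S"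
proof -
  have a: "(\<lambda>n. fix_within V E r (1/2) (Suc n) S) \<longlonglongrightarrow> fp V E r (1/2) S"
    using h_lim[OF assms(1)] by (rule LIMSEQ_Suc)
  have b: "(\<lambda>n. fix_within V E r (1/2) (Suc n) S) \<longlonglongrightarrow> stp V E r (1/2) (fp V E r (1/2)) S"
    using stp_tendsto[OF h_lim assms(1)] assms(2) by (simp add: fw_Suc)
  show ?thesis using LIMSEQ_unique[OF a b] .
qed

lemma boundary: assumes "S \<subseteq> V" "S \<noteq> {}" "S \<noteq> V"
  shows "\<exists>u\<in>S. \<exists>v. v \<in> V \<and> v \<notin> S \<and> E u v"
proof -
  obtain x where x: "x \<in> S" using assms by blast
  obtain y where y: "y \<in> V" "y \<notin> S" using assms by blast
  have R: "(\<lambda>a b. a \<in> V \<and> b \<in> V \<and> E a b)\<^sup>*\<^sup>* x y"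
    using conn x y assms(1) unfolding connected_graph_def by blast
  have "y \<notin> S \<longrightarrow> (\<exists>u\<in>S. \<exists>v. v \<in> V \<and> v \<notin> S \<and> E u v)"
    using R
  proof (induction rule: rtranclp_induct)
    case base then show ?case using x by blast
  next
    case (step b c)
    then show ?case by blast
  qed
  then show ?thesis using y by blast
qed

lemma main_loc: assumes S0: "S0 \<subseteq> V"
  shows "real (card S0) / real (card V) \<le> fp V E r (1/2) S0"
proof -
  define L where "L = fp V E r (1/2)"
  define \<psi> :: "'a set \<Rightarrow> real" where "\<psi> = (\<lambda>T. real (card T) / real (card V))"
  define D where "D = (\<lambda>T. \<psi> T - L T)"
  have LV: "L V = 1" unfolding L_def fp_def h_V by simp
  have L0: "L {} = 0" unfolding L_def fp_def h_empty by simp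
  have DV: "D V = 0" using LV N_pos by (simp add: D_def \<psi>_def)
  have D0: "D {} = 0" using L0 by (simp add: D_def \<psi>_def)
  have Dsub: "D S \<le> stp V E r (1/2) D S" if "S \<subseteq> V" "S \<noteq> V" for S
  proof -
    have "stp V E r (1/2) D S = stp V E r (1/2) \<psi> S - stp V E r (1/2) L S"
      unfolding D_def by (rule stp_diff[symmetric])
    also have "stp V E r (1/2) L S = L S" using L_fix[OF that] unfolding L_def by simp
    finally show ?thesis using submart[OF that(1)] unfolding D_def \<psi>_def by simp
  qed
  define M where "M = Max (D ` Pow V)"
  have finP: "finite (D ` Pow V)" using finV by simp
  have DM: "D T \<le> M" if "T \<subseteq> V" for T unfolding M_def using finP that by (intro Max_ge) auto
  have "M \<in> D ` Pow V" unfolding M_def using finP by (intro Max_in) auto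
  then obtain Sm where Sm: "Sm \<subseteq> V" "D Sm = M" by auto
  have "M \<le> 0"
  proof (rule ccontr)
    assume "\<not> M \<le> 0"
    then have Mpos: "M > 0" by simp
    have "\<forall>S. S \<subseteq> V \<longrightarrow> D S = M \<longrightarrow> card (V - S) = k \<longrightarrow> False" for k
    proof (induction k rule: less_induct)
      case (less k)
      show ?case
      proof (intro allI impI)
        fix S assume S: "S \<subseteq> V" "D S = M" "card (V - S) = k"
        have SV: "S \<noteq> V" using S DV Mpos by auto
        have Sne: "S \<noteq> {}" using S D0 Mpos by auto
        obtain u v where u: "u \<in> S" and v: "v \<in> V" "v \<notin> S" and Euv: "E u v"
          using boundary[OF S(1) Sne SV] by blast
        have uV: "u \<in> V" using u S by auto
        have vn: "v \<in> nbrs V E u" using v Euv by (simp add: nb_mem)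
        have upd: "upd S u v = insert v S" using u by (simp add: upd_def)
        have "M \<le> stp V E r (1/2) D S" using Dsub[OF S(1) SV] S by simp
        also have "stp V E r (1/2) D S = M - stp V E r (1/2) (\<lambda>T. M - D T) S"
          using stp_diff[of "1/2" "\<lambda>T. M" S D] stp_const[of "1/2" M S] by simp
        finally have st: "stp V E r (1/2) (\<lambda>T. M - D T) S \<le> 0" by simp
        define c where "c = (1 - 1/2) * (fit r S u / (\<Sum>w\<in>V. fit r S w) * (1 / real (card (nbrs V E u))))"
        have cpos: "c > 0" unfolding c_def using fit_pos[of S u] F_pos[of S] d_pos[OF uV] by simp
        have "(1 - 1/2) * (fit r S u / (\<Sum>w\<in>V. fit r S w) * (1 / real (card (nbrs V E u)) * (M - D (upd S u v))))
          \<le> stp V E r (1/2) (\<lambda>T. M - D T) S"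
          using DM S(1) uV vn by (intro stp_single) auto
        moreover have "(1 - 1/2) * (fit r S u / (\<Sum>w\<in>V. fit r S w) * (1 / real (card (nbrs V E u)) * (M - D (upd S u v))))
           = c * (M - D (insert v S))" unfolding c_def upd by (simp only: mult.assoc)
        ultimately have "c * (M - D (insert v S)) \<le> 0" using st by linarith
        then have "M - D (insert v S) \<le> 0" using cpos by (simp add: mult_le_0_iff)
        then have DI: "D (insert v S) = M" using DM[of "insert v S"] S(1) v by auto
        have "card (V - insert v S) < k"
        proof -
          have "V - insert v S = (V - S) - {v}" by auto
          moreover have "v \<in> V - S" using v by auto
          moreover have "finite (V - S)" using finV by auto
          ultimately show ?thesis using S(3) by (metis card_Diff1_less)
        qed
        then show False using less[rule_format, OF _ _ DI refl] S(1) v by auto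
      qed
    qed
    then show False using Sm by blast
  qed
  then have "D S0 \<le> 0" using DM[OF S0] by simp
  then show ?thesis unfolding D_def \<psi>_def L_def by simp
qed

end

theorem mainTheorem14:
  fixes V :: "'a set" and E :: "'a \<Rightarrow> 'a \<Rightarrow> bool" and S0 :: "'a set" and r :: real
  assumes "finite V" and "V \<noteq> {}"
    and "\<And>x y. E x y \<Longrightarrow> x \<in> V \<and> y \<in> V"
    and "\<And>x y. E x y \<Longrightarrow> E y x"
    and "\<And>x. \<not> E x x"
    and "connected_graph V E"
    and "S0 \<subseteq> V"
    and "r > 1"
  shows "fp V E r (1/2) S0 \<ge> real (card S0) / real (card V)"
proof (cases "S0 = {} \<or> S0 = V")
  case True
  then show ?thesis
  proof
    assume "S0 = {}"
    then show ?thesis using assms(2) by (simp add: fp_def fw_empty)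
  next
    assume "S0 = V"
    then show ?thesis using assms(1,2) by (simp add: fp_def fw_V)
  qed
next
  case False
  then obtain a b where ab: "a \<in> V" "b \<in> V" "a \<noteq> b" using assms(7) by blast
  have nb: "nbrs V E x \<noteq> {}" if x: "x \<in> V" for x
  proof -
    have "\<exists>y\<in>V. y \<noteq> x" using ab by (cases "x = a") auto
    then obtain y where y: "y \<in> V" "y \<noteq> x" by blast
    have "(\<lambda>a b. a \<in> V \<and> b \<in> V \<and> E a b)\<^sup>*\<^sup>* x y"
      using assms(6) x y unfolding connected_graph_def by blast
    then have "\<exists>z. x \<in> V \<and> z \<in> V \<and> E x z"
      using y(2) by (induction rule: converse_rtranclp_induct) auto
    then obtain z where "x \<in> V \<and> z \<in> V \<and> E x z" by blast
    then show ?thesis by (auto simp: nbrs_def)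
  qed
  interpret mg V E r
    using assms nb by unfold_locales auto
  show ?thesis using main_loc[OF assms(7)] by simp
qed

end
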